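(* For $x=re^{i\theta}\in C$, $$\|A^S(x)\|^2-\frac{g}{2n}\|H^S(x)\|^2=\frac{n}{2r^2}\big\{g(1-\delta^2)\csc^2 g\theta+(g-2)\big\}.$$ If moreover $m_1=m_2$ (which always holds when $g\in\{1,3,6\}$), then $$\|A^S(x)\|^2-\frac{g}{n}\|H^S(x)\|^2=\frac{n(g-1)}{r^2}.$$
   Context: Let $M^n$ be a compact isoparametric hypersurface in the unit sphere $S^{n+1}\subset\mathbb{R}^{n+2}$ (constant principal curvatures) with $g$ distinct principal curvatures; then $g\in\{1,2,3,4,6\}$. Fix $x_0\in M$ and identify the 2-dimensional normal space $\nu_{x_0}M$ of $M$ in $\mathbb{R}^{n+2}$ with $\mathbb{C}$ so that the two focal submanifolds $M_+$, $M_-$ ($\dim M_+\le\dim M_-$) meet the normal circle at $1$ and $e^{i\pi/g}$ (the intersection points closest to $x_0$). The Weyl chamber is $C=\{re^{i\theta}:r>0,\ 0<\theta<\pi/g\}$. For $k=1,\dots,g$ let $\theta_k=k\pi/g-\pi/2$, $\alpha_k=e^{i\theta_k}$, and $m_k=m_1$ for $k$ odd, $m_k=m_2$ for $k$ even, where $(m_1,m_2)$, $m_1\le m_2$, is the multiplicity data of the principal curvatures; $m_1=m_2$ if $g$ is odd, and $(m_1+m_2)g=2n$. For $x\in C$, $M_x=\{p+\tilde\xi(p):p\in M\}$ where $\tilde\xi$ is the parallel normal field on $M$ with $\tilde\xi(x_0)=x-x_0$; it is an $n$-dimensional isoparametric submanifold of $\mathbb{R}^{n+2}$ lying in $S^{n+1}(|x|)$,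 with normal space $\nu_{x_0}M$ at $x$, and $T_xM_x=\oplus_kE_k$, $\dim E_k=m_k$, with Euclidean shape operator $A_\xi|_{E_k}=\langle\xi,-\alpha_k/\langle x,\alpha_k\rangle\rangle\mathrm{Id}$ ($\langle\cdot,\cdot\rangle$ the real inner product on $\mathbb{C}=\mathbb{R}^2$). $H^E(x),A^E(x)$ denote mean curvature vector and shape operator of $M_x$ at $x$ in $\mathbb{R}^{n+2}$; $H^S(x),A^S(x)$ those of $M_x$ as a hypersurface of $S^{n+1}(|x|)$; $\|A\|^2$ is the sum of squared Hilbert–Schmidt norms over an orthonormal normal basis. Set $\delta=(m_2-m_1)/(m_2+m_1)$ if $g\ge2$ and $\delta=0$ if $g=1$, and let $\theta_{\min}\in(0,\pi/g)$ be defined by $\cos g\theta_{\min}=-\delta$. *)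

theory Defs
  imports Complex_Main
begin

text \<open>The normal space of M at x0 is identified with the complex plane; the real inner
product on it is the Euclidean one of R^2.\<close>
definition cinner :: "complex \<Rightarrow> complex \<Rightarrow> real" where
  "cinner a b = Re (a * cnj b)"

definition iso_alpha :: "nat \<Rightarrow> nat \<Rightarrow> complex" where
  "iso_alpha g k = cis (real k * pi / real g - pi / 2)"

definition iso_mult :: "nat \<Rightarrow> nat \<Rightarrow> nat \<Rightarrow> nat" where
  "iso_mult m1 m2 k = (if odd k then m1 else m2)"

text \<open>Eigenvalue of the Euclidean shape operator A_xi of M_x at x on E_k:
  A_xi restricted to E_k is  < xi, - alpha_k / <x, alpha_k> > Id.\<close>
definition iso_shape_eig :: "nat \<Rightarrow> complex \<Rightarrow> complex \<Rightarrow> nat \<Rightarrow> real" where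
  "iso_shape_eig g x \<xi> k = cinner \<xi> (- iso_alpha g k / complex_of_real (cinner x (iso_alpha g k)))"

text \<open>Unit normal of M_x inside the sphere S^{n+1}(|x|) at x: the unit vector of the
  normal plane orthogonal to the position vector x, i.e. i x / |x|.
  (The normal space of M_x in the sphere is 1-dimensional and spanned by it.)\<close>
definition sph_normal :: "complex \<Rightarrow> complex" where
  "sph_normal x = \<i> * x / complex_of_real (cmod x)"

text \<open>Shape operator of M_x as a hypersurface of the sphere: A^S = A^E_{nu}, nu the sphere
  normal; it is diagonal with eigenvalue iso_shape_eig on E_k (dim m_k).
  Squared Hilbert--Schmidt norm, computed in an orthonormal eigenbasis: sum over
  k of m_k * eigenvalue^2.\<close>
definition AS_normsq :: "nat \<Rightarrow> nat \<Rightarrow> nat \<Rightarrow> complex \<Rightarrow> real" where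
  "AS_normsq g m1 m2 x =
     (\<Sum>k=1..g. real (iso_mult m1 m2 k) * (iso_shape_eig g x (sph_normal x) k)^2)"

text \<open>Mean curvature vector H^S = (trace A^S) nu, as a vector of the normal plane.\<close>
definition HS :: "nat \<Rightarrow> nat \<Rightarrow> nat \<Rightarrow> complex \<Rightarrow> complex" where
  "HS g m1 m2 x =
     complex_of_real (\<Sum>k=1..g. real (iso_mult m1 m2 k) * iso_shape_eig g x (sph_normal x) k)
       * sph_normal x"

definition iso_delta :: "nat \<Rightarrow> nat \<Rightarrow> nat \<Rightarrow> real" where
  "iso_delta g m1 m2 = (if g \<ge> 2 then (real m2 - real m1) / (real m2 + real m1) else 0)"

end

theory Submission
  imports Defs
begin


definition cotk :: "nat \<Rightarrow> real \<Rightarrow> nat \<Rightarrow> real" where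
 "cotk g t k = cos (t - real k * pi / real g) / sin (t - real k * pi / real g)"

lemma cinner_div: "cinner u (v / complex_of_real c) = cinner u v / c"
  unfolding cinner_def by (simp add: divide_simps)
lemma cinner_neg: "cinner u (- v) = - cinner u v"
  unfolding cinner_def by simp

lemma eig:
  assumes hr: "0 < r" and hx: "x = complex_of_real r * cis t"
  shows "iso_shape_eig g x (sph_normal x) k = - cotk g t k / r"
proof -
  define b where "b = t - real k * pi / real g"
  have cm: "cmod x = r" using hr hx by (simp add: norm_mult)
  have sn: "sph_normal x = \<i> * cis t" using hr unfolding sph_normal_def cm by (simp add: hx)
  have al: "iso_alpha g k = cis (t - b - pi/2)" unfolding iso_alpha_def b_def by (simp add: algebra_simps)
  have c1: "cinner x (iso_alpha g k) = - r * sin b"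
  proof -
    have e: "x * cnj (iso_alpha g k) = complex_of_real r * cis (b + pi/2)"
      unfolding al hx by (simp add: cis_cnj mult.assoc cis_mult add.commute)
    thus ?thesis unfolding cinner_def by (simp only: e) (simp add: cos_add)
  qed
  have c2: "cinner (\<i> * cis t) (cis (t - b - pi/2)) = - cos b"
  proof -
    have e: "\<i> * cis t * cnj (cis (t - b - pi/2)) = \<i> * cis (b + pi/2)"
      by (simp add: cis_cnj mult.assoc cis_mult add.commute)
    thus ?thesis unfolding cinner_def by (simp only: e) (simp add: sin_add)
  qed
  have "iso_shape_eig g x (sph_normal x) k = cinner (\<i> * cis t) (- cis (t - b - pi/2) / complex_of_real (- r * sin b))"
    unfolding iso_shape_eig_def sn c1 unfolding al ..
  also have "\<dots> = cos b / (- r * sin b)"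
    by (simp only: cinner_div cinner_neg c2)
  finally show ?thesis unfolding cotk_def b_def[symmetric] by (simp add: field_simps)
qed

lemma sinneg:
  assumes t0: "0 < t" and t1: "t < pi / real g" and k1: "1 \<le> k" and kg: "k \<le> g"
  shows "sin (t - real k * pi / real g) < 0"
proof -
  have g0: "real g > 0" using k1 kg by simp
  have "real k * pi / real g \<le> pi" using kg g0 by (simp add: field_simps)
  moreover have "pi / real g \<le> real k * pi / real g" using k1 g0 by (simp add: field_simps)
  ultimately have "0 < real k * pi / real g - t" "real k * pi / real g - t < pi" using t0 t1 by linarith+
  hence "sin (real k * pi / real g - t) > 0" by (rule sin_gt_zero)
  thus ?thesis by (metis minus_diff_eq sin_minus neg_less_0_iff_less)
qed


lemma fin_even:
  fixes h m1 m2 r S C M :: real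
  assumes sc: "S^2 + C^2 - 1 = 0" and S: "S \<noteq> 0" and C: "C \<noteq> 0" and r: "r \<noteq> 0"
   and m: "M \<noteq> 0" and h: "h \<noteq> 0" and M: "m1 + m2 - M = 0"
  shows "(m1*(h^2 / C^2 - h) + m2*(h^2 / S^2 - h))/r^2 - 1/M * ((m1*(- h * S / C) + m2*(h * C / S))^2/r^2)
      = M*h / (2*r^2) * (2*h * (4*m1*m2/M^2) / (2*S*C)^2 + (2*h - 2))"
proof -
  have "(m1*(h^2 / C^2 - h) + m2*(h^2 / S^2 - h))/r^2 - 1/M * ((m1*(- h * S / C) + m2*(h * C / S))^2/r^2)
      - M*h / (2*r^2) * (2*h * (4*m1*m2/M^2) / (2*S*C)^2 + (2*h - 2)) = 0"
    using S C r m h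
    apply (simp add: field_simps)
    using sc M by algebra
  thus ?thesis by simp
qed

lemma fin_even2:
  fixes h m r S C :: real
  assumes sc: "S^2 + C^2 - 1 = 0" and S: "S \<noteq> 0" and C: "C \<noteq> 0" and r: "r \<noteq> 0"
   and m: "m \<noteq> 0" and h: "h \<noteq> 0"
  shows "(m*(h^2 / C^2 - h) + m*(h^2 / S^2 - h))/r^2 - 1/m * ((m*(- h * S / C) + m*(h * C / S))^2/r^2)
      = 2*m*h*(2*h-1)/r^2"
proof -
  have "(m*(h^2 / C^2 - h) + m*(h^2 / S^2 - h))/r^2 - 1/m * ((m*(- h * S / C) + m*(h * C / S))^2/r^2)
      - 2*m*h*(2*h-1)/r^2 = 0"
    using S C r m h
    apply (simp add: field_simps)
    using sc by algebra
  thus ?thesis by simp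
qed

lemma fin_odd:
  fixes g m r S C :: real
  assumes sc: "S^2 + C^2 - 1 = 0" and S: "S \<noteq> 0" and r: "r \<noteq> 0"
   and m: "m \<noteq> 0" and h: "g \<noteq> 0"
  shows "m*(g^2/S^2 - g)/r^2 - 1/(2*m) * ((m*(g*C/S))^2/r^2) = m*g/(2*r^2) * (g / S^2 + (g - 2))"
    and "m*(g^2/S^2 - g)/r^2 - 1/m * ((m*(g*C/S))^2/r^2) = m*g*(g - 1)/r^2"
proof -
  have "m*(g^2/S^2 - g)/r^2 - 1/(2*m) * ((m*(g*C/S))^2/r^2) - m*g/(2*r^2) * (g / S^2 + (g - 2)) = 0"
    using S r m h
    apply (simp add: field_simps)
    using sc by algebra
  thus "m*(g^2/S^2 - g)/r^2 - 1/(2*m) * ((m*(g*C/S))^2/r^2) = m*g/(2*r^2) * (g / S^2 + (g - 2))" by simp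
  have "m*(g^2/S^2 - g)/r^2 - 1/m * ((m*(g*C/S))^2/r^2) - m*g*(g - 1)/r^2 = 0"
    using S r m h
    apply (simp add: field_simps)
    using sc by algebra
  thus "m*(g^2/S^2 - g)/r^2 - 1/m * ((m*(g*C/S))^2/r^2) = m*g*(g - 1)/r^2" by simp
qed

lemma main_even:
  fixes g h m1 m2 n :: nat and r S C AS HH P1 P2 Q1 Q2 t :: real
  assumes sc: "S^2 + C^2 = 1" and S: "S \<noteq> 0" and C: "C \<noteq> 0" and r: "r > 0"
   and hm1: "1 \<le> m1" and h: "h \<ge> 1" and g: "g = 2*h"
   and hn: "(m1 + m2) * g = 2 * n"
   and sg: "sin (real g * t) = 2*S*C"
   and p1: "P1 = - h * S / C" and p2: "P2 = h^2 / C^2 - h"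
   and q1: "Q1 = h * C / S" and q2: "Q2 = h^2 / S^2 - h"
   and hA: "AS = (m1*P2 + m2*Q2)/r^2" and hH: "HH = (m1*P1 + m2*Q1)^2/r^2"
  shows "AS - real g / (2 * real n) * HH
           = real n / (2 * r^2) * (real g * (1 - (iso_delta g m1 m2)^2) / (sin (real g * t))^2
                                   + (real g - 2))
         \<and> (m1 = m2 \<longrightarrow> AS - real g / real n * HH = real n * (real g - 1) / r^2)"
proof
  have nn: "real n = (real m1 + real m2) * real h"
  proof -
    have "n = (m1+m2)*h" using hn g by simp
    thus ?thesis by simp
  qed
  have M0: "real m1 + real m2 \<noteq> 0" using hm1 by simp
  have npos: "real n > 0" using nn hm1 h by simp
  have gn: "real g / (2 * real n) = 1 / (real m1 + real m2)"
    using g nn M0 h npos by (simp add: field_simps)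
  have dd: "1 - (iso_delta g m1 m2)^2 = 4 * real m1 * real m2 / (real m1 + real m2)^2"
  proof -
    have "1 - ((real m2 - real m1) / (real m2 + real m1))^2
        = ((real m2 + real m1)^2 - (real m2 - real m1)^2) / (real m2 + real m1)^2"
      using M0 by (simp add: power_divide add.commute diff_divide_distrib[symmetric] del: diff_divide_distrib) (simp add: field_simps)
    also have "\<dots> = 4 * real m1 * real m2 / (real m1 + real m2)^2"
      by (simp add: power2_eq_square algebra_simps)
    finally show ?thesis using g h unfolding iso_delta_def by simp
  qed
  show "AS - real g / (2 * real n) * HH
           = real n / (2 * r^2) * (real g * (1 - (iso_delta g m1 m2)^2) / (sin (real g * t))^2
                                   + (real g - 2))"
    unfolding gn dd sg nn hA hH p1 p2 q1 q2
    using fin_even[of S C r "real m1 + real m2" "real h" "real m1" "real m2"] sc S C r M0 h g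
    by simp
  show "m1 = m2 \<longrightarrow> AS - real g / real n * HH = real n * (real g - 1) / r^2"
  proof
    assume e: "m1 = m2"
    have gn2: "real g / real n = 1 / real m1"
      using g nn M0 h e npos by (simp add: field_simps)
    show "AS - real g / real n * HH = real n * (real g - 1) / r^2"
      unfolding gn2 hA hH p1 p2 q1 q2 using fin_even2[of S C r "real m1" "real h"] sc S C r hm1 h g e nn
      by simp
  qed
qed

lemma main_odd:
  fixes g m1 m2 n :: nat and r S C AS HH P1 P2 t :: real
  assumes sc: "S^2 + C^2 = 1" and S: "S \<noteq> 0" and r: "r > 0"
   and hm1: "1 \<le> m1" and g: "g \<ge> 1" and e: "m1 = m2"
   and hn: "(m1 + m2) * g = 2 * n"
   and sg: "sin (real g * t) = S"
   and p1: "P1 = g * C / S" and p2: "P2 = g^2 / S^2 - g"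
   and hA: "AS = (m1*P2)/r^2" and hH: "HH = (m1*P1)^2/r^2"
  shows "AS - real g / (2 * real n) * HH
           = real n / (2 * r^2) * (real g * (1 - (iso_delta g m1 m2)^2) / (sin (real g * t))^2
                                   + (real g - 2))
         \<and> (m1 = m2 \<longrightarrow> AS - real g / real n * HH = real n * (real g - 1) / r^2)"
proof -
  have nn: "real n = real m1 * real g"
  proof -
    have "n = m1*g" using hn e by (simp add: algebra_simps mult_2[symmetric])
    thus ?thesis by simp
  qed
  have npos: "real n > 0" using nn hm1 g by simp
  have gn: "real g / (2 * real n) = 1 / (2 * real m1)"
    using g nn npos by (simp add: field_simps)
  have gn2: "real g / real n = 1 / real m1"
    using g nn npos by (simp add: field_simps)
  have dd: "iso_delta g m1 m2 = 0" unfolding iso_delta_def e by simp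
  have sc': "S^2 + C^2 - 1 = 0" using sc by simp
  note f = fin_odd[OF sc' S _ _ , of r "real m1" "real g"]
  show ?thesis
    unfolding gn gn2 dd sg nn hA hH p1 p2 using f r hm1 g e by (simp add: mult_ac)
qed

lemma trigx:
  "cos (2*pi/3) = -1/2" "sin (2*pi/3) = sqrt 3/2"
  "cos (5*pi/6) = -(sqrt 3/2)" "sin (5*pi/6) = 1/2"
  "cos (3*pi/4) = -(sqrt 2/2)" "sin (3*pi/4) = sqrt 2/2"
proof -
  have a: "2*pi/3 = pi - pi/3" "5*pi/6 = pi - pi/6" "3*pi/4 = pi - pi/4" by simp_all
  show "cos (2*pi/3) = -1/2" "sin (2*pi/3) = sqrt 3/2"
    "cos (5*pi/6) = -(sqrt 3/2)" "sin (5*pi/6) = 1/2"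
    "cos (3*pi/4) = -(sqrt 2/2)" "sin (3*pi/4) = sqrt 2/2"
    unfolding a by (simp_all only: cos_pi_minus sin_pi_minus cos_60 sin_60 cos_30 sin_30 cos_45 sin_45)
qed

lemma trig6:
  fixes t :: real assumes t0: "0 < t" and t1: "t < pi / real 6"
  shows "cotk 6 t 1 + cotk 6 t 3 + cotk 6 t 5 = - 3 * sin (3*t) / cos (3*t)"
    and "(cotk 6 t 1)^2 + (cotk 6 t 3)^2 + (cotk 6 t 5)^2 = 9 / (cos (3*t))^2 - 3"
    and "cotk 6 t 2 + cotk 6 t 4 + cotk 6 t 6 = 3 * cos (3*t) / sin (3*t)"
    and "(cotk 6 t 2)^2 + (cotk 6 t 4)^2 + (cotk 6 t 6)^2 = 9 / (sin (3*t))^2 - 3"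
proof -
  define s where "s = sin t"
  define c where "c = cos t"
  define q where "q = sqrt 3"
  have hq: "q^2 - 3 = 0" unfolding q_def by simp
  have hsc: "s^2 + c^2 - 1 = 0" unfolding s_def c_def by simp
  have hS: "sin (3*t) = 2*s*c*c + (c^2 - s^2)*s"
  proof - have "sin (3*t) = sin (2*t + t)" by simp
    also have "\<dots> = 2*s*c*c + (c^2 - s^2)*s" unfolding sin_add sin_double cos_double s_def c_def by (simp add: algebra_simps)
    finally show ?thesis . qed
  have hC: "cos (3*t) = 4*c^3 - 3*c" unfolding c_def by (simp add: cos_treble_cos)
  have Spos: "sin (3*t) > 0" using t0 t1 by (intro sin_gt_zero) (auto simp: field_simps)
  have Cpos: "cos (3*t) > 0" using t0 t1 by (intro cos_gt_zero) (auto simp: field_simps)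
  have a1: "real 1 * pi / real 6 = pi/6" by (simp add: field_simps)
  have sv1: "2 * sin (t - real 1 * pi / real 6) = (s*(q) - c*(1))"
    unfolding a1 s_def c_def q_def by (simp add: sin_diff cos_30 sin_30 cos_45 sin_45 cos_60 sin_60 sin_pi_minus cos_pi_minus trigx)
  have cv1: "2 * cos (t - real 1 * pi / real 6) = (c*(q) + s*(1))"
    unfolding a1 s_def c_def q_def by (simp add: cos_diff cos_30 sin_30 cos_45 sin_45 cos_60 sin_60 sin_pi_minus cos_pi_minus trigx)
  have d1: "(s*(q) - c*(1)) \<noteq> 0"
  proof - have "(s*(q) - c*(1)) < 0" using sinneg[OF t0 t1, of 1] sv1 by simp
    thus ?thesis by (rule less_imp_neq) qed
  have e1: "cotk 6 t 1 * (s*(q) - c*(1)) - (c*(q) + s*(1)) = 0"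
  proof - have "sin (t - real 1 * pi / real 6) \<noteq> 0" using d1 sv1 by (metis mult_zero_right)
    thus ?thesis unfolding sv1[symmetric] cv1[symmetric] cotk_def by (simp add: field_simps) qed
  have a2: "real 2 * pi / real 6 = pi/3" by (simp add: field_simps)
  have sv2: "2 * sin (t - real 2 * pi / real 6) = (s*(1) - c*(q))"
    unfolding a2 s_def c_def q_def by (simp add: sin_diff cos_30 sin_30 cos_45 sin_45 cos_60 sin_60 sin_pi_minus cos_pi_minus trigx)
  have cv2: "2 * cos (t - real 2 * pi / real 6) = (c*(1) + s*(q))"
    unfolding a2 s_def c_def q_def by (simp add: cos_diff cos_30 sin_30 cos_45 sin_45 cos_60 sin_60 sin_pi_minus cos_pi_minus trigx)
  have d2: "(s*(1) - c*(q)) \<noteq> 0"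
  proof - have "(s*(1) - c*(q)) < 0" using sinneg[OF t0 t1, of 2] sv2 by simp
    thus ?thesis by (rule less_imp_neq) qed
  have e2: "cotk 6 t 2 * (s*(1) - c*(q)) - (c*(1) + s*(q)) = 0"
  proof - have "sin (t - real 2 * pi / real 6) \<noteq> 0" using d2 sv2 by (metis mult_zero_right)
    thus ?thesis unfolding sv2[symmetric] cv2[symmetric] cotk_def by (simp add: field_simps) qed
  have a3: "real 3 * pi / real 6 = pi/2" by (simp add: field_simps)
  have sv3: "2 * sin (t - real 3 * pi / real 6) = (s*(0) - c*(2))"
    unfolding a3 s_def c_def q_def by (simp add: sin_diff cos_30 sin_30 cos_45 sin_45 cos_60 sin_60 sin_pi_minus cos_pi_minus trigx)
  have cv3: "2 * cos (t - real 3 * pi / real 6) = (c*(0) + s*(2))"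
    unfolding a3 s_def c_def q_def by (simp add: cos_diff cos_30 sin_30 cos_45 sin_45 cos_60 sin_60 sin_pi_minus cos_pi_minus trigx)
  have d3: "(s*(0) - c*(2)) \<noteq> 0"
  proof - have "(s*(0) - c*(2)) < 0" using sinneg[OF t0 t1, of 3] sv3 by simp
    thus ?thesis by (rule less_imp_neq) qed
  have e3: "cotk 6 t 3 * (s*(0) - c*(2)) - (c*(0) + s*(2)) = 0"
  proof - have "sin (t - real 3 * pi / real 6) \<noteq> 0" using d3 sv3 by (metis mult_zero_right)
    thus ?thesis unfolding sv3[symmetric] cv3[symmetric] cotk_def by (simp add: field_simps) qed
  have a4: "real 4 * pi / real 6 = pi - pi/3" by (simp add: field_simps)
  have sv4: "2 * sin (t - real 4 * pi / real 6) = (s*(-1) - c*(q))"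
    unfolding a4 s_def c_def q_def by (simp add: sin_diff cos_30 sin_30 cos_45 sin_45 cos_60 sin_60 sin_pi_minus cos_pi_minus trigx)
  have cv4: "2 * cos (t - real 4 * pi / real 6) = (c*(-1) + s*(q))"
    unfolding a4 s_def c_def q_def by (simp add: cos_diff cos_30 sin_30 cos_45 sin_45 cos_60 sin_60 sin_pi_minus cos_pi_minus trigx)
  have d4: "(s*(-1) - c*(q)) \<noteq> 0"
  proof - have "(s*(-1) - c*(q)) < 0" using sinneg[OF t0 t1, of 4] sv4 by simp
    thus ?thesis by (rule less_imp_neq) qed
  have e4: "cotk 6 t 4 * (s*(-1) - c*(q)) - (c*(-1) + s*(q)) = 0"
  proof - have "sin (t - real 4 * pi / real 6) \<noteq> 0" using d4 sv4 by (metis mult_zero_right)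
    thus ?thesis unfolding sv4[symmetric] cv4[symmetric] cotk_def by (simp add: field_simps) qed
  have a5: "real 5 * pi / real 6 = pi - pi/6" by (simp add: field_simps)
  have sv5: "2 * sin (t - real 5 * pi / real 6) = (s*(-q) - c*(1))"
    unfolding a5 s_def c_def q_def by (simp add: sin_diff cos_30 sin_30 cos_45 sin_45 cos_60 sin_60 sin_pi_minus cos_pi_minus trigx)
  have cv5: "2 * cos (t - real 5 * pi / real 6) = (c*(-q) + s*(1))"
    unfolding a5 s_def c_def q_def by (simp add: cos_diff cos_30 sin_30 cos_45 sin_45 cos_60 sin_60 sin_pi_minus cos_pi_minus trigx)
  have d5: "(s*(-q) - c*(1)) \<noteq> 0"
  proof - have "(s*(-q) - c*(1)) < 0" using sinneg[OF t0 t1, of 5] sv5 by simp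
    thus ?thesis by (rule less_imp_neq) qed
  have e5: "cotk 6 t 5 * (s*(-q) - c*(1)) - (c*(-q) + s*(1)) = 0"
  proof - have "sin (t - real 5 * pi / real 6) \<noteq> 0" using d5 sv5 by (metis mult_zero_right)
    thus ?thesis unfolding sv5[symmetric] cv5[symmetric] cotk_def by (simp add: field_simps) qed
  have a6: "real 6 * pi / real 6 = pi" by (simp add: field_simps)
  have sv6: "2 * sin (t - real 6 * pi / real 6) = (s*(-2) - c*(0))"
    unfolding a6 s_def c_def q_def by (simp add: sin_diff cos_30 sin_30 cos_45 sin_45 cos_60 sin_60 sin_pi_minus cos_pi_minus trigx)
  have cv6: "2 * cos (t - real 6 * pi / real 6) = (c*(-2) + s*(0))"
    unfolding a6 s_def c_def q_def by (simp add: cos_diff cos_30 sin_30 cos_45 sin_45 cos_60 sin_60 sin_pi_minus cos_pi_minus trigx)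
  have d6: "(s*(-2) - c*(0)) \<noteq> 0"
  proof - have "(s*(-2) - c*(0)) < 0" using sinneg[OF t0 t1, of 6] sv6 by simp
    thus ?thesis by (rule less_imp_neq) qed
  have e6: "cotk 6 t 6 * (s*(-2) - c*(0)) - (c*(-2) + s*(0)) = 0"
  proof - have "sin (t - real 6 * pi / real 6) \<noteq> 0" using d6 sv6 by (metis mult_zero_right)
    thus ?thesis unfolding sv6[symmetric] cv6[symmetric] cotk_def by (simp add: field_simps) qed
  note alg = hq hsc d1 d2 d3 d4 d5 d6 e1 e2 e3 e4 e5 e6
  have S0: "2*s*c*c + (c^2 - s^2)*s \<noteq> 0" using Spos hS by (metis less_irrefl)
  have C0: "4*c^3 - 3*c \<noteq> 0" using Cpos hC by (metis less_irrefl)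
  have r1: "(cotk 6 t 1 + cotk 6 t 3 + cotk 6 t 5) * (4*c^3 - 3*c) + 3 * (2*s*c*c + (c^2 - s^2)*s) = 0" using alg C0 S0 by algebra
  have r2: "((cotk 6 t 1)^2 + (cotk 6 t 3)^2 + (cotk 6 t 5)^2) * (4*c^3 - 3*c)^2 - 9 + 3 * (4*c^3 - 3*c)^2 = 0" using alg C0 S0 by algebra
  have r3: "(cotk 6 t 2 + cotk 6 t 4 + cotk 6 t 6) * (2*s*c*c + (c^2 - s^2)*s) - 3 * (4*c^3 - 3*c) = 0" using alg C0 S0 by algebra
  have r4: "((cotk 6 t 2)^2 + (cotk 6 t 4)^2 + (cotk 6 t 6)^2) * (2*s*c*c + (c^2 - s^2)*s)^2 - 9 + 3 * (2*s*c*c + (c^2 - s^2)*s)^2 = 0" using alg C0 S0 by algebra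
  show "cotk 6 t 1 + cotk 6 t 3 + cotk 6 t 5 = - 3 * sin (3*t) / cos (3*t)" using r1 C0 unfolding hS hC by (simp add: field_simps)
  show "(cotk 6 t 1)^2 + (cotk 6 t 3)^2 + (cotk 6 t 5)^2 = 9 / (cos (3*t))^2 - 3" using r2 C0 unfolding hS hC by (simp add: field_simps)
  show "cotk 6 t 2 + cotk 6 t 4 + cotk 6 t 6 = 3 * cos (3*t) / sin (3*t)" using r3 S0 unfolding hS hC by (simp add: field_simps)
  show "(cotk 6 t 2)^2 + (cotk 6 t 4)^2 + (cotk 6 t 6)^2 = 9 / (sin (3*t))^2 - 3" using r4 S0 unfolding hS hC by (simp add: field_simps)
qed

lemma trig4:
  fixes t :: real assumes t0: "0 < t" and t1: "t < pi / real 4"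
  shows "cotk 4 t 1 + cotk 4 t 3 = - 2 * sin (2*t) / cos (2*t)"
    and "(cotk 4 t 1)^2 + (cotk 4 t 3)^2 = 4 / (cos (2*t))^2 - 2"
    and "cotk 4 t 2 + cotk 4 t 4 = 2 * cos (2*t) / sin (2*t)"
    and "(cotk 4 t 2)^2 + (cotk 4 t 4)^2 = 4 / (sin (2*t))^2 - 2"
proof -
  define s where "s = sin t"
  define c where "c = cos t"
  define q where "q = sqrt 2"
  have hq: "q^2 - 2 = 0" unfolding q_def by simp
  have hsc: "s^2 + c^2 - 1 = 0" unfolding s_def c_def by simp
  have hS: "sin (2*t) = 2*s*c" unfolding s_def c_def by (simp add: sin_double)
  have hC: "cos (2*t) = c^2 - s^2" unfolding s_def c_def by (simp add: cos_double)
  have Spos: "sin (2*t) > 0" using t0 t1 by (intro sin_gt_zero) (auto simp: field_simps)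
  have Cpos: "cos (2*t) > 0" using t0 t1 by (intro cos_gt_zero) (auto simp: field_simps)
  have a1: "real 1 * pi / real 4 = pi/4" by (simp add: field_simps)
  have sv1: "2 * sin (t - real 1 * pi / real 4) = (s*(q) - c*(q))"
    unfolding a1 s_def c_def q_def by (simp add: sin_diff cos_30 sin_30 cos_45 sin_45 cos_60 sin_60 sin_pi_minus cos_pi_minus trigx)
  have cv1: "2 * cos (t - real 1 * pi / real 4) = (c*(q) + s*(q))"
    unfolding a1 s_def c_def q_def by (simp add: cos_diff cos_30 sin_30 cos_45 sin_45 cos_60 sin_60 sin_pi_minus cos_pi_minus trigx)
  have d1: "(s*(q) - c*(q)) \<noteq> 0"
  proof - have "(s*(q) - c*(q)) < 0" using sinneg[OF t0 t1, of 1] sv1 by simp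
    thus ?thesis by (rule less_imp_neq) qed
  have e1: "cotk 4 t 1 * (s*(q) - c*(q)) - (c*(q) + s*(q)) = 0"
  proof - have "sin (t - real 1 * pi / real 4) \<noteq> 0" using d1 sv1 by (metis mult_zero_right)
    thus ?thesis unfolding sv1[symmetric] cv1[symmetric] cotk_def by (simp add: field_simps) qed
  have a2: "real 2 * pi / real 4 = pi/2" by (simp add: field_simps)
  have sv2: "2 * sin (t - real 2 * pi / real 4) = (s*(0) - c*(2))"
    unfolding a2 s_def c_def q_def by (simp add: sin_diff cos_30 sin_30 cos_45 sin_45 cos_60 sin_60 sin_pi_minus cos_pi_minus trigx)
  have cv2: "2 * cos (t - real 2 * pi / real 4) = (c*(0) + s*(2))"
    unfolding a2 s_def c_def q_def by (simp add: cos_diff cos_30 sin_30 cos_45 sin_45 cos_60 sin_60 sin_pi_minus cos_pi_minus trigx)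
  have d2: "(s*(0) - c*(2)) \<noteq> 0"
  proof - have "(s*(0) - c*(2)) < 0" using sinneg[OF t0 t1, of 2] sv2 by simp
    thus ?thesis by (rule less_imp_neq) qed
  have e2: "cotk 4 t 2 * (s*(0) - c*(2)) - (c*(0) + s*(2)) = 0"
  proof - have "sin (t - real 2 * pi / real 4) \<noteq> 0" using d2 sv2 by (metis mult_zero_right)
    thus ?thesis unfolding sv2[symmetric] cv2[symmetric] cotk_def by (simp add: field_simps) qed
  have a3: "real 3 * pi / real 4 = pi - pi/4" by (simp add: field_simps)
  have sv3: "2 * sin (t - real 3 * pi / real 4) = (s*(-q) - c*(q))"
    unfolding a3 s_def c_def q_def by (simp add: sin_diff cos_30 sin_30 cos_45 sin_45 cos_60 sin_60 sin_pi_minus cos_pi_minus trigx)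
  have cv3: "2 * cos (t - real 3 * pi / real 4) = (c*(-q) + s*(q))"
    unfolding a3 s_def c_def q_def by (simp add: cos_diff cos_30 sin_30 cos_45 sin_45 cos_60 sin_60 sin_pi_minus cos_pi_minus trigx)
  have d3: "(s*(-q) - c*(q)) \<noteq> 0"
  proof - have "(s*(-q) - c*(q)) < 0" using sinneg[OF t0 t1, of 3] sv3 by simp
    thus ?thesis by (rule less_imp_neq) qed
  have e3: "cotk 4 t 3 * (s*(-q) - c*(q)) - (c*(-q) + s*(q)) = 0"
  proof - have "sin (t - real 3 * pi / real 4) \<noteq> 0" using d3 sv3 by (metis mult_zero_right)
    thus ?thesis unfolding sv3[symmetric] cv3[symmetric] cotk_def by (simp add: field_simps) qed
  have a4: "real 4 * pi / real 4 = pi" by (simp add: field_simps)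
  have sv4: "2 * sin (t - real 4 * pi / real 4) = (s*(-2) - c*(0))"
    unfolding a4 s_def c_def q_def by (simp add: sin_diff cos_30 sin_30 cos_45 sin_45 cos_60 sin_60 sin_pi_minus cos_pi_minus trigx)
  have cv4: "2 * cos (t - real 4 * pi / real 4) = (c*(-2) + s*(0))"
    unfolding a4 s_def c_def q_def by (simp add: cos_diff cos_30 sin_30 cos_45 sin_45 cos_60 sin_60 sin_pi_minus cos_pi_minus trigx)
  have d4: "(s*(-2) - c*(0)) \<noteq> 0"
  proof - have "(s*(-2) - c*(0)) < 0" using sinneg[OF t0 t1, of 4] sv4 by simp
    thus ?thesis by (rule less_imp_neq) qed
  have e4: "cotk 4 t 4 * (s*(-2) - c*(0)) - (c*(-2) + s*(0)) = 0"
  proof - have "sin (t - real 4 * pi / real 4) \<noteq> 0" using d4 sv4 by (metis mult_zero_right)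
    thus ?thesis unfolding sv4[symmetric] cv4[symmetric] cotk_def by (simp add: field_simps) qed
  note alg = hq hsc d1 d2 d3 d4 e1 e2 e3 e4
  have S0: "2*s*c \<noteq> 0" using Spos hS by (metis less_irrefl)
  have C0: "c^2 - s^2 \<noteq> 0" using Cpos hC by (metis less_irrefl)
  have r1: "(cotk 4 t 1 + cotk 4 t 3) * (c^2 - s^2) + 2 * (2*s*c) = 0" using alg C0 S0 by algebra
  have r2: "((cotk 4 t 1)^2 + (cotk 4 t 3)^2) * (c^2 - s^2)^2 - 4 + 2 * (c^2 - s^2)^2 = 0" using alg C0 S0 by algebra
  have r3: "(cotk 4 t 2 + cotk 4 t 4) * (2*s*c) - 2 * (c^2 - s^2) = 0" using alg C0 S0 by algebra
  have r4: "((cotk 4 t 2)^2 + (cotk 4 t 4)^2) * (2*s*c)^2 - 4 + 2 * (2*s*c)^2 = 0" using alg C0 S0 by algebra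
  show "cotk 4 t 1 + cotk 4 t 3 = - 2 * sin (2*t) / cos (2*t)" using r1 C0 unfolding hS hC by (simp add: field_simps)
  show "(cotk 4 t 1)^2 + (cotk 4 t 3)^2 = 4 / (cos (2*t))^2 - 2" using r2 C0 unfolding hS hC by (simp add: field_simps)
  show "cotk 4 t 2 + cotk 4 t 4 = 2 * cos (2*t) / sin (2*t)" using r3 S0 unfolding hS hC by (simp add: field_simps)
  show "(cotk 4 t 2)^2 + (cotk 4 t 4)^2 = 4 / (sin (2*t))^2 - 2" using r4 S0 unfolding hS hC by (simp add: field_simps)
qed

lemma trig3:
  fixes t :: real assumes t0: "0 < t" and t1: "t < pi / real 3"
  shows "cotk 3 t 1 + cotk 3 t 2 + cotk 3 t 3 = 3 * cos (3*t) / sin (3*t)"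
    and "(cotk 3 t 1)^2 + (cotk 3 t 2)^2 + (cotk 3 t 3)^2 = 9 / (sin (3*t))^2 - 3"
proof -
  define s where "s = sin t"
  define c where "c = cos t"
  define q where "q = sqrt 3"
  have hq: "q^2 - 3 = 0" unfolding q_def by simp
  have hsc: "s^2 + c^2 - 1 = 0" unfolding s_def c_def by simp
  have hS: "sin (3*t) = 2*s*c*c + (c^2 - s^2)*s"
  proof - have "sin (3*t) = sin (2*t + t)" by simp
    also have "\<dots> = 2*s*c*c + (c^2 - s^2)*s" unfolding sin_add sin_double cos_double s_def c_def by (simp add: algebra_simps)
    finally show ?thesis . qed
  have hC: "cos (3*t) = 4*c^3 - 3*c" unfolding c_def by (simp add: cos_treble_cos)
  have Spos: "sin (3*t) > 0" using t0 t1 by (intro sin_gt_zero) (auto simp: field_simps)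
  have a1: "real 1 * pi / real 3 = pi/3" by (simp add: field_simps)
  have sv1: "2 * sin (t - real 1 * pi / real 3) = (s*(1) - c*(q))"
    unfolding a1 s_def c_def q_def by (simp add: sin_diff cos_30 sin_30 cos_45 sin_45 cos_60 sin_60 sin_pi_minus cos_pi_minus trigx)
  have cv1: "2 * cos (t - real 1 * pi / real 3) = (c*(1) + s*(q))"
    unfolding a1 s_def c_def q_def by (simp add: cos_diff cos_30 sin_30 cos_45 sin_45 cos_60 sin_60 sin_pi_minus cos_pi_minus trigx)
  have d1: "(s*(1) - c*(q)) \<noteq> 0"
  proof - have "(s*(1) - c*(q)) < 0" using sinneg[OF t0 t1, of 1] sv1 by simp
    thus ?thesis by (rule less_imp_neq) qed
  have e1: "cotk 3 t 1 * (s*(1) - c*(q)) - (c*(1) + s*(q)) = 0"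
  proof - have "sin (t - real 1 * pi / real 3) \<noteq> 0" using d1 sv1 by (metis mult_zero_right)
    thus ?thesis unfolding sv1[symmetric] cv1[symmetric] cotk_def by (simp add: field_simps) qed
  have a2: "real 2 * pi / real 3 = pi - pi/3" by (simp add: field_simps)
  have sv2: "2 * sin (t - real 2 * pi / real 3) = (s*(-1) - c*(q))"
    unfolding a2 s_def c_def q_def by (simp add: sin_diff cos_30 sin_30 cos_45 sin_45 cos_60 sin_60 sin_pi_minus cos_pi_minus trigx)
  have cv2: "2 * cos (t - real 2 * pi / real 3) = (c*(-1) + s*(q))"
    unfolding a2 s_def c_def q_def by (simp add: cos_diff cos_30 sin_30 cos_45 sin_45 cos_60 sin_60 sin_pi_minus cos_pi_minus trigx)
  have d2: "(s*(-1) - c*(q)) \<noteq> 0"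
  proof - have "(s*(-1) - c*(q)) < 0" using sinneg[OF t0 t1, of 2] sv2 by simp
    thus ?thesis by (rule less_imp_neq) qed
  have e2: "cotk 3 t 2 * (s*(-1) - c*(q)) - (c*(-1) + s*(q)) = 0"
  proof - have "sin (t - real 2 * pi / real 3) \<noteq> 0" using d2 sv2 by (metis mult_zero_right)
    thus ?thesis unfolding sv2[symmetric] cv2[symmetric] cotk_def by (simp add: field_simps) qed
  have a3: "real 3 * pi / real 3 = pi" by (simp add: field_simps)
  have sv3: "2 * sin (t - real 3 * pi / real 3) = (s*(-2) - c*(0))"
    unfolding a3 s_def c_def q_def by (simp add: sin_diff cos_30 sin_30 cos_45 sin_45 cos_60 sin_60 sin_pi_minus cos_pi_minus trigx)
  have cv3: "2 * cos (t - real 3 * pi / real 3) = (c*(-2) + s*(0))"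
    unfolding a3 s_def c_def q_def by (simp add: cos_diff cos_30 sin_30 cos_45 sin_45 cos_60 sin_60 sin_pi_minus cos_pi_minus trigx)
  have d3: "(s*(-2) - c*(0)) \<noteq> 0"
  proof - have "(s*(-2) - c*(0)) < 0" using sinneg[OF t0 t1, of 3] sv3 by simp
    thus ?thesis by (rule less_imp_neq) qed
  have e3: "cotk 3 t 3 * (s*(-2) - c*(0)) - (c*(-2) + s*(0)) = 0"
  proof - have "sin (t - real 3 * pi / real 3) \<noteq> 0" using d3 sv3 by (metis mult_zero_right)
    thus ?thesis unfolding sv3[symmetric] cv3[symmetric] cotk_def by (simp add: field_simps) qed
  note alg = hq hsc d1 d2 d3 e1 e2 e3
  have S0: "2*s*c*c + (c^2 - s^2)*s \<noteq> 0" using Spos hS by (metis less_irrefl)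
  have r1: "(cotk 3 t 1 + cotk 3 t 2 + cotk 3 t 3) * (2*s*c*c + (c^2 - s^2)*s) - 3 * (4*c^3 - 3*c) = 0" using alg S0 by algebra
  have r2: "((cotk 3 t 1)^2 + (cotk 3 t 2)^2 + (cotk 3 t 3)^2) * (2*s*c*c + (c^2 - s^2)*s)^2 - 9 + 3 * (2*s*c*c + (c^2 - s^2)*s)^2 = 0" using alg S0 by algebra
  show "cotk 3 t 1 + cotk 3 t 2 + cotk 3 t 3 = 3 * cos (3*t) / sin (3*t)" using r1 S0 unfolding hS hC by (simp add: field_simps)
  show "(cotk 3 t 1)^2 + (cotk 3 t 2)^2 + (cotk 3 t 3)^2 = 9 / (sin (3*t))^2 - 3" using r2 S0 unfolding hS hC by (simp add: field_simps)
qed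

lemma trig2:
  fixes t :: real assumes t0: "0 < t" and t1: "t < pi / real 2"
  shows "cotk 2 t 1 = - 1 * sin (1*t) / cos (1*t)"
    and "(cotk 2 t 1)^2 = 1 / (cos (1*t))^2 - 1"
    and "cotk 2 t 2 = 1 * cos (1*t) / sin (1*t)"
    and "(cotk 2 t 2)^2 = 1 / (sin (1*t))^2 - 1"
proof -
  define s where "s = sin t"
  define c where "c = cos t"
  define q where "q = sqrt 3"
  have hq: "q^2 - 3 = 0" unfolding q_def by simp
  have hsc: "s^2 + c^2 - 1 = 0" unfolding s_def c_def by simp
  have hS: "sin (1*t) = s" unfolding s_def by simp
  have hC: "cos (1*t) = c" unfolding c_def by simp
  have Spos: "sin (1*t) > 0" using t0 t1 by (intro sin_gt_zero) (auto simp: field_simps)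
  have Cpos: "cos (1*t) > 0" using t0 t1 by (intro cos_gt_zero) (auto simp: field_simps)
  have a1: "real 1 * pi / real 2 = pi/2" by (simp add: field_simps)
  have sv1: "2 * sin (t - real 1 * pi / real 2) = (s*(0) - c*(2))"
    unfolding a1 s_def c_def q_def by (simp add: sin_diff cos_30 sin_30 cos_45 sin_45 cos_60 sin_60 sin_pi_minus cos_pi_minus trigx)
  have cv1: "2 * cos (t - real 1 * pi / real 2) = (c*(0) + s*(2))"
    unfolding a1 s_def c_def q_def by (simp add: cos_diff cos_30 sin_30 cos_45 sin_45 cos_60 sin_60 sin_pi_minus cos_pi_minus trigx)
  have d1: "(s*(0) - c*(2)) \<noteq> 0"
  proof - have "(s*(0) - c*(2)) < 0" using sinneg[OF t0 t1, of 1] sv1 by simp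
    thus ?thesis by (rule less_imp_neq) qed
  have e1: "cotk 2 t 1 * (s*(0) - c*(2)) - (c*(0) + s*(2)) = 0"
  proof - have "sin (t - real 1 * pi / real 2) \<noteq> 0" using d1 sv1 by (metis mult_zero_right)
    thus ?thesis unfolding sv1[symmetric] cv1[symmetric] cotk_def by (simp add: field_simps) qed
  have a2: "real 2 * pi / real 2 = pi" by (simp add: field_simps)
  have sv2: "2 * sin (t - real 2 * pi / real 2) = (s*(-2) - c*(0))"
    unfolding a2 s_def c_def q_def by (simp add: sin_diff cos_30 sin_30 cos_45 sin_45 cos_60 sin_60 sin_pi_minus cos_pi_minus trigx)
  have cv2: "2 * cos (t - real 2 * pi / real 2) = (c*(-2) + s*(0))"
    unfolding a2 s_def c_def q_def by (simp add: cos_diff cos_30 sin_30 cos_45 sin_45 cos_60 sin_60 sin_pi_minus cos_pi_minus trigx)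
  have d2: "(s*(-2) - c*(0)) \<noteq> 0"
  proof - have "(s*(-2) - c*(0)) < 0" using sinneg[OF t0 t1, of 2] sv2 by simp
    thus ?thesis by (rule less_imp_neq) qed
  have e2: "cotk 2 t 2 * (s*(-2) - c*(0)) - (c*(-2) + s*(0)) = 0"
  proof - have "sin (t - real 2 * pi / real 2) \<noteq> 0" using d2 sv2 by (metis mult_zero_right)
    thus ?thesis unfolding sv2[symmetric] cv2[symmetric] cotk_def by (simp add: field_simps) qed
  note alg = hq hsc d1 d2 e1 e2
  have S0: "s \<noteq> 0" using Spos hS by (metis less_irrefl)
  have C0: "c \<noteq> 0" using Cpos hC by (metis less_irrefl)
  have r1: "(cotk 2 t 1) * (c) + 1 * (s) = 0" using alg C0 S0 by algebra
  have r2: "((cotk 2 t 1)^2) * (c)^2 - 1 + 1 * (c)^2 = 0" using alg C0 S0 by algebra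
  have r3: "(cotk 2 t 2) * (s) - 1 * (c) = 0" using alg C0 S0 by algebra
  have r4: "((cotk 2 t 2)^2) * (s)^2 - 1 + 1 * (s)^2 = 0" using alg C0 S0 by algebra
  show "cotk 2 t 1 = - 1 * sin (1*t) / cos (1*t)" using r1 C0 unfolding hS hC by (simp add: field_simps)
  show "(cotk 2 t 1)^2 = 1 / (cos (1*t))^2 - 1" using r2 C0 unfolding hS hC by (simp add: field_simps)
  show "cotk 2 t 2 = 1 * cos (1*t) / sin (1*t)" using r3 S0 unfolding hS hC by (simp add: field_simps)
  show "(cotk 2 t 2)^2 = 1 / (sin (1*t))^2 - 1" using r4 S0 unfolding hS hC by (simp add: field_simps)
qed

lemma trig1:
  fixes t :: real assumes t0: "0 < t" and t1: "t < pi / real 1"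
  shows "cotk 1 t 1 = 1 * cos (1*t) / sin (1*t)"
    and "(cotk 1 t 1)^2 = 1 / (sin (1*t))^2 - 1"
proof -
  define s where "s = sin t"
  define c where "c = cos t"
  define q where "q = sqrt 3"
  have hq: "q^2 - 3 = 0" unfolding q_def by simp
  have hsc: "s^2 + c^2 - 1 = 0" unfolding s_def c_def by simp
  have hS: "sin (1*t) = s" unfolding s_def by simp
  have hC: "cos (1*t) = c" unfolding c_def by simp
  have Spos: "sin (1*t) > 0" using t0 t1 by (intro sin_gt_zero) (auto simp: field_simps)
  have a1: "real 1 * pi / real 1 = pi" by (simp add: field_simps)
  have sv1: "2 * sin (t - real 1 * pi / real 1) = (s*(-2) - c*(0))"
    unfolding a1 s_def c_def q_def by (simp add: sin_diff cos_30 sin_30 cos_45 sin_45 cos_60 sin_60 sin_pi_minus cos_pi_minus trigx)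
  have cv1: "2 * cos (t - real 1 * pi / real 1) = (c*(-2) + s*(0))"
    unfolding a1 s_def c_def q_def by (simp add: cos_diff cos_30 sin_30 cos_45 sin_45 cos_60 sin_60 sin_pi_minus cos_pi_minus trigx)
  have d1: "(s*(-2) - c*(0)) \<noteq> 0"
  proof - have "(s*(-2) - c*(0)) < 0" using sinneg[OF t0 t1, of 1] sv1 by simp
    thus ?thesis by (rule less_imp_neq) qed
  have e1: "cotk 1 t 1 * (s*(-2) - c*(0)) - (c*(-2) + s*(0)) = 0"
  proof - have "sin (t - real 1 * pi / real 1) \<noteq> 0" using d1 sv1 by (metis mult_zero_right)
    thus ?thesis unfolding sv1[symmetric] cv1[symmetric] cotk_def by (simp add: field_simps) qed
  note alg = hq hsc d1 e1
  have S0: "s \<noteq> 0" using Spos hS by (metis less_irrefl)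
  have r1: "(cotk 1 t 1) * (s) - 1 * (c) = 0" using alg S0 by algebra
  have r2: "((cotk 1 t 1)^2) * (s)^2 - 1 + 1 * (s)^2 = 0" using alg S0 by algebra
  show "cotk 1 t 1 = 1 * cos (1*t) / sin (1*t)" using r1 S0 unfolding hS hC by (simp add: field_simps)
  show "(cotk 1 t 1)^2 = 1 / (sin (1*t))^2 - 1" using r2 S0 unfolding hS hC by (simp add: field_simps)
qed


lemma red:
  assumes hr: "0 < r" and hx: "x = complex_of_real r * cis t"
  shows "AS_normsq g m1 m2 x = (\<Sum>k=1..g. real (iso_mult m1 m2 k) * (cotk g t k)^2) / r^2"
    and "(cmod (HS g m1 m2 x))^2 = (\<Sum>k=1..g. real (iso_mult m1 m2 k) * cotk g t k)^2 / r^2"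
proof -
  show "AS_normsq g m1 m2 x = (\<Sum>k=1..g. real (iso_mult m1 m2 k) * (cotk g t k)^2) / r^2"
    unfolding AS_normsq_def eig[OF hr hx] by (simp add: power_divide sum_divide_distrib)
  have cm: "cmod x = r" using hr hx by (simp add: norm_mult)
  have sn: "cmod (sph_normal x) = 1" using hr unfolding sph_normal_def cm by (simp add: hx norm_mult)
  have X: "(\<Sum>k=1..g. real (iso_mult m1 m2 k) * iso_shape_eig g x (sph_normal x) k)
      = - (\<Sum>k=1..g. real (iso_mult m1 m2 k) * cotk g t k) / r"
    unfolding eig[OF hr hx] by (simp add: sum_divide_distrib sum_negf)
  show "(cmod (HS g m1 m2 x))^2 = (\<Sum>k=1..g. real (iso_mult m1 m2 k) * cotk g t k)^2 / r^2"
    unfolding HS_def norm_mult sn X norm_of_real by (simp add: power_divide)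
qed

lemma sum1: "(\<Sum>k=(1::nat)..1. f k) = (f 1::real)" by simp
lemma sum2: "(\<Sum>k=(1::nat)..2. f k) = f 1 + (f 2::real)" by (simp add: eval_nat_numeral)
lemma sum3: "(\<Sum>k=(1::nat)..3. f k) = f 1 + f 2 + (f 3::real)" by (simp add: eval_nat_numeral)
lemma sum4: "(\<Sum>k=(1::nat)..4. f k) = f 1 + f 2 + f 3 + (f 4::real)" by (simp add: eval_nat_numeral)
lemma sum6: "(\<Sum>k=(1::nat)..6. f k) = f 1 + f 2 + f 3 + f 4 + f 5 + (f 6::real)" by (simp add: eval_nat_numeral)

theorem lemma4p11:
  fixes g m1 m2 n :: nat and r \<theta> :: real and x :: complex
  assumes hg: "g \<in> {1, 2, 3, 4, 6}"
    and hm1: "1 \<le> m1" and hm12: "m1 \<le> m2"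
    and hodd: "odd g \<Longrightarrow> m1 = m2"
    and hn: "(m1 + m2) * g = 2 * n"
    and hr: "0 < r" and ht0: "0 < \<theta>" and ht1: "\<theta> < pi / real g"
    and hx: "x = complex_of_real r * cis \<theta>"
  shows "AS_normsq g m1 m2 x - real g / (2 * real n) * (cmod (HS g m1 m2 x))^2
           = real n / (2 * r^2) * (real g * (1 - (iso_delta g m1 m2)^2) / (sin (real g * \<theta>))^2
                                   + (real g - 2))
         \<and> (m1 = m2 \<longrightarrow>
           AS_normsq g m1 m2 x - real g / real n * (cmod (HS g m1 m2 x))^2
             = real n * (real g - 1) / r^2)"
proof -
  note R = red[OF hr hx, of g m1 m2]
  from hg consider "g = 1" | "g = 2" | "g = 3" | "g = 4" | "g = 6" by auto
  then show ?thesis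
  proof cases
    case 5
    hence e6: "g = 6" .
    note T = trig6[OF ht0 ht1[unfolded e6]]
    have sg: "sin (real g * \<theta>) = 2 * sin (3*\<theta>) * cos (3*\<theta>)"
      using sin_double[of "3*\<theta>"] e6 by simp
    show ?thesis
    proof (rule main_even[OF _ _ _ hr hm1 _ _ hn sg])
      show "(sin (3*\<theta>))^2 + (cos (3*\<theta>))^2 = 1" by simp
      show "sin (3*\<theta>) \<noteq> 0" using ht0 ht1 e6 by (intro order.strict_implies_not_eq[symmetric] sin_gt_zero) (auto simp: field_simps)
      show "cos (3*\<theta>) \<noteq> 0" using ht0 ht1 e6 by (intro order.strict_implies_not_eq[symmetric] cos_gt_zero) (auto simp: field_simps)
      show "g = 2 * 3" using e6 by simp
      show "1 \<le> (3::nat)" by simp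
      show "AS_normsq g m1 m2 x = (real m1 * (cotk 6 \<theta> 1 ^ 2 + cotk 6 \<theta> 3 ^ 2 + cotk 6 \<theta> 5 ^ 2)
          + real m2 * (cotk 6 \<theta> 2 ^ 2 + cotk 6 \<theta> 4 ^ 2 + cotk 6 \<theta> 6 ^ 2)) / r^2"
        unfolding R unfolding e6 sum6 by (simp add: iso_mult_def algebra_simps)
      show "(cmod (HS g m1 m2 x))^2 = (real m1 * (cotk 6 \<theta> 1 + cotk 6 \<theta> 3 + cotk 6 \<theta> 5)
          + real m2 * (cotk 6 \<theta> 2 + cotk 6 \<theta> 4 + cotk 6 \<theta> 6))^2 / r^2"
        unfolding R unfolding e6 sum6 by (simp add: iso_mult_def algebra_simps)
    qed (use T in simp_all)
  next
    case 4
    hence e4: "g = 4" .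
    note T = trig4[OF ht0 ht1[unfolded e4]]
    have sg: "sin (real g * \<theta>) = 2 * sin (2*\<theta>) * cos (2*\<theta>)"
      using sin_double[of "2*\<theta>"] e4 by simp
    show ?thesis
    proof (rule main_even[OF _ _ _ hr hm1 _ _ hn sg])
      show "(sin (2*\<theta>))^2 + (cos (2*\<theta>))^2 = 1" by simp
      show "sin (2*\<theta>) \<noteq> 0" using ht0 ht1 e4 by (intro order.strict_implies_not_eq[symmetric] sin_gt_zero) (auto simp: field_simps)
      show "cos (2*\<theta>) \<noteq> 0" using ht0 ht1 e4 by (intro order.strict_implies_not_eq[symmetric] cos_gt_zero) (auto simp: field_simps)
      show "g = 2 * 2" using e4 by simp
      show "1 \<le> (2::nat)" by simp
      show "AS_normsq g m1 m2 x = (real m1 * (cotk 4 \<theta> 1 ^ 2 + cotk 4 \<theta> 3 ^ 2) + real m2 * (cotk 4 \<theta> 2 ^ 2 + cotk 4 \<theta> 4 ^ 2)) / r^2"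
        unfolding R unfolding e4 sum4 by (simp add: iso_mult_def algebra_simps)
      show "(cmod (HS g m1 m2 x))^2 = (real m1 * (cotk 4 \<theta> 1 + cotk 4 \<theta> 3) + real m2 * (cotk 4 \<theta> 2 + cotk 4 \<theta> 4))^2 / r^2"
        unfolding R unfolding e4 sum4 by (simp add: iso_mult_def algebra_simps)
    qed (use T in simp_all)
  next
    case 2
    hence e2: "g = 2" .
    note T = trig2[OF ht0 ht1[unfolded e2]]
    have sg: "sin (real g * \<theta>) = 2 * sin (1*\<theta>) * cos (1*\<theta>)"
      using sin_double[of "1*\<theta>"] e2 by simp
    show ?thesis
    proof (rule main_even[OF _ _ _ hr hm1 _ _ hn sg])
      show "(sin (1*\<theta>))^2 + (cos (1*\<theta>))^2 = 1" by simp
      show "sin (1*\<theta>) \<noteq> 0" using ht0 ht1 e2 by (intro order.strict_implies_not_eq[symmetric] sin_gt_zero) (auto simp: field_simps)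
      show "cos (1*\<theta>) \<noteq> 0" using ht0 ht1 e2 by (intro order.strict_implies_not_eq[symmetric] cos_gt_zero) (auto simp: field_simps)
      show "g = 2 * 1" using e2 by simp
      show "1 \<le> (1::nat)" by simp
      show "AS_normsq g m1 m2 x = (real m1 * (cotk 2 \<theta> 1 ^ 2) + real m2 * (cotk 2 \<theta> 2 ^ 2)) / r^2"
        unfolding R unfolding e2 sum2 by (simp add: iso_mult_def algebra_simps)
      show "(cmod (HS g m1 m2 x))^2 = (real m1 * (cotk 2 \<theta> 1) + real m2 * (cotk 2 \<theta> 2))^2 / r^2"
        unfolding R unfolding e2 sum2 by (simp add: iso_mult_def algebra_simps)
    qed (use T in simp_all)
  next
    case 3
    hence e3: "g = 3" .
    have em: "m1 = m2" using hodd e3 by simp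
    note T = trig3[OF ht0 ht1[unfolded e3]]
    show ?thesis
    proof (rule main_odd[OF _ _ hr hm1 _ em hn])
      show "(sin (3*\<theta>))^2 + (cos (3*\<theta>))^2 = 1" by simp
      show "sin (3*\<theta>) \<noteq> 0" using ht0 ht1 e3 by (intro order.strict_implies_not_eq[symmetric] sin_gt_zero) (auto simp: field_simps)
      show "1 \<le> g" using e3 by simp
      show "sin (real g * \<theta>) = sin (3*\<theta>)" using e3 by simp
      show "AS_normsq g m1 m2 x = (real m1 * (cotk 3 \<theta> 1 ^ 2 + cotk 3 \<theta> 2 ^ 2 + cotk 3 \<theta> 3 ^ 2)) / r^2"
        unfolding R unfolding e3 sum3 using em by (simp add: iso_mult_def algebra_simps)
      show "(cmod (HS g m1 m2 x))^2 = (real m1 * (cotk 3 \<theta> 1 + cotk 3 \<theta> 2 + cotk 3 \<theta> 3))^2 / r^2"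
        unfolding R unfolding e3 sum3 using em by (simp add: iso_mult_def algebra_simps)
    qed (use T e3 in simp_all)
  next
    case 1
    hence e1: "g = 1" .
    have em: "m1 = m2" using hodd e1 by simp
    note T = trig1[OF ht0 ht1[unfolded e1]]
    show ?thesis
    proof (rule main_odd[OF _ _ hr hm1 _ em hn])
      show "(sin (1*\<theta>))^2 + (cos (1*\<theta>))^2 = 1" by simp
      show "sin (1*\<theta>) \<noteq> 0" using ht0 ht1 e1 by (intro order.strict_implies_not_eq[symmetric] sin_gt_zero) (auto simp: field_simps)
      show "1 \<le> g" using e1 by simp
      show "sin (real g * \<theta>) = sin (1*\<theta>)" using e1 by simp
      show "AS_normsq g m1 m2 x = (real m1 * (cotk 1 \<theta> 1 ^ 2)) / r^2"
        unfolding R unfolding e1 sum1 using em by (simp add: iso_mult_def algebra_simps)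
      show "(cmod (HS g m1 m2 x))^2 = (real m1 * (cotk 1 \<theta> 1))^2 / r^2"
        unfolding R unfolding e1 sum1 using em by (simp add: iso_mult_def algebra_simps)
    qed (use T e1 in simp_all)
  qed
qed

end
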